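(* Let $p$ be an odd prime and let $G$ be a quasi-powerful $p$-group. For any $g,h\in G$ there exist $j\in G$ and $z\in Z(G)$ such that $g^{p}h^{p}=j^{p}z$.
   Context: For an odd prime $p$, a finite $p$-group $G$ is powerful if $[G,G]\le G^{p}$ (where $G^{p}=\langle g^p\mid g\in G\rangle$), and $G$ is quasi-powerful if $G/Z(G)$ is powerful. *)

theory Defs
  imports "HOL-Algebra.Algebra"
begin

definition group_center :: "('a, 'b) monoid_scheme \<Rightarrow> 'a set" where
  "group_center G = {z \<in> carrier G. \<forall>g \<in> carrier G. z \<otimes>\<^bsub>G\<^esub> g = g \<otimes>\<^bsub>G\<^esub> z}"

definition p_group :: "nat \<Rightarrow> ('a, 'b) monoid_scheme \<Rightarrow> bool" where
  "p_group p G \<longleftrightarrow> group G \<and> finite (carrier G) \<and> (\<exists>n. order G = p ^ n)"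

definition pth_power_subgroup :: "nat \<Rightarrow> ('a, 'b) monoid_scheme \<Rightarrow> 'a set" where
  "pth_power_subgroup p G = generate G {g [^]\<^bsub>G\<^esub> p | g. g \<in> carrier G}"

definition powerful :: "nat \<Rightarrow> ('a, 'b) monoid_scheme \<Rightarrow> bool" where
  "powerful p G \<longleftrightarrow> derived G (carrier G) \<subseteq> pth_power_subgroup p G"

definition quasi_powerful :: "nat \<Rightarrow> ('a, 'b) monoid_scheme \<Rightarrow> bool" where
  "quasi_powerful p G \<longleftrightarrow> powerful p (G Mod group_center G)"

end

theory Submission
  imports Defs
begin


definition cm :: "('a,'b) monoid_scheme \<Rightarrow> 'a \<Rightarrow> 'a \<Rightarrow> 'a" where
  "cm G x y = inv\<^bsub>G\<^esub> x \<otimes>\<^bsub>G\<^esub> inv\<^bsub>G\<^esub> y \<otimes>\<^bsub>G\<^esub> x \<otimes>\<^bsub>G\<^esub> y"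

context group begin

lemma inv_cancel_l [simp]: "x \<in> carrier G \<Longrightarrow> y \<in> carrier G \<Longrightarrow> inv x \<otimes> (x \<otimes> y) = y"
  by (simp flip: m_assoc)
lemma inv_cancel_r [simp]: "x \<in> carrier G \<Longrightarrow> y \<in> carrier G \<Longrightarrow> x \<otimes> (inv x \<otimes> y) = y"
  by (simp flip: m_assoc)

lemma cm_closed [simp]: "x \<in> carrier G \<Longrightarrow> y \<in> carrier G \<Longrightarrow> cm G x y \<in> carrier G"
  by (simp add: cm_def)

lemma cm_one_iff: "x \<in> carrier G \<Longrightarrow> y \<in> carrier G \<Longrightarrow> cm G x y = \<one> \<longleftrightarrow> x \<otimes> y = y \<otimes> x"
proof -
  assume x: "x \<in> carrier G" and y: "y \<in> carrier G"
  have "cm G x y = inv (y \<otimes> x) \<otimes> (x \<otimes> y)" using x y by (simp add: cm_def inv_mult_group m_assoc)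
  also have "\<dots> = \<one> \<longleftrightarrow> x \<otimes> y = y \<otimes> x"
    using x y by (metis inv_closed inv_inv l_inv m_closed inv_equality)
  finally show ?thesis .
qed

lemma comm_left: "x \<in> carrier G \<Longrightarrow> y \<in> carrier G \<Longrightarrow> z \<in> carrier G \<Longrightarrow> x \<otimes> y = y \<otimes> x \<Longrightarrow>
  x \<otimes> (y \<otimes> z) = y \<otimes> (x \<otimes> z)"
  by (metis m_assoc)

lemma swap_cm: "a \<in> carrier G \<Longrightarrow> b \<in> carrier G \<Longrightarrow> b \<otimes> a = a \<otimes> b \<otimes> cm G b a"
  by (simp add: cm_def m_assoc)

lemma conj_cm: "a \<in> carrier G \<Longrightarrow> b \<in> carrier G \<Longrightarrow> inv a \<otimes> b \<otimes> a = b \<otimes> cm G b a"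
  by (simp add: cm_def m_assoc)

lemma pow_comm1: "a \<in> carrier G \<Longrightarrow> b \<in> carrier G \<Longrightarrow> a \<otimes> b = b \<otimes> a \<Longrightarrow>
   b [^] (n::nat) \<otimes> a = a \<otimes> b [^] n"
proof (induction n)
  case 0 then show ?case by simp
next
  case (Suc m)
  have "b [^] Suc m \<otimes> a = b [^] m \<otimes> (b \<otimes> a)" using Suc.prems by (simp add: m_assoc)
  also have "\<dots> = b [^] m \<otimes> a \<otimes> b" using Suc.prems by (simp add: m_assoc)
  also have "\<dots> = a \<otimes> b [^] Suc m" using Suc by (simp add: m_assoc)
  finally show ?case .
qed

lemma pow_comm_mult: "a \<in> carrier G \<Longrightarrow> b \<in> carrier G \<Longrightarrow> a \<otimes> b = b \<otimes> a \<Longrightarrow>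
   (a \<otimes> b) [^] (n::nat) = a [^] n \<otimes> b [^] n"
proof (induction n)
  case 0 then show ?case by simp
next
  case (Suc n)
  have c: "b [^] n \<otimes> a = a \<otimes> b [^] n" using pow_comm1 Suc.prems by blast
  have "(a \<otimes> b) [^] Suc n = a [^] n \<otimes> (b [^] n \<otimes> a) \<otimes> b" using Suc by (simp add: m_assoc)
  also have "\<dots> = a [^] Suc n \<otimes> b [^] Suc n" using Suc c by (simp add: m_assoc)
  finally show ?case .
qed

lemma class2_aux:
  assumes a: "a \<in> carrier G" and b: "b \<in> carrier G"
    and ea: "cm G b a \<otimes> a = a \<otimes> cm G b a" and eb: "cm G b a \<otimes> b = b \<otimes> cm G b a"
  shows "b [^] (n::nat) \<otimes> a = a \<otimes> b [^] n \<otimes> cm G b a [^] n"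
proof -
  let ?e = "cm G b a"
  have e: "?e \<in> carrier G" using a b by simp
  have "inv a \<otimes> b [^] n \<otimes> a = (inv a \<otimes> b \<otimes> a) [^] n"
  proof (induction n)
    case 0 then show ?case using a by simp
  next
    case (Suc n)
    have "inv a \<otimes> b [^] Suc n \<otimes> a = (inv a \<otimes> b [^] n \<otimes> a) \<otimes> (inv a \<otimes> b \<otimes> a)"
      using a b by (simp add: m_assoc)
    then show ?case using Suc by simp
  qed
  also have "\<dots> = (b \<otimes> ?e) [^] n" using a b by (simp add: conj_cm)
  also have "\<dots> = b [^] n \<otimes> ?e [^] n" using pow_comm_mult[OF b e] eb by simp
  finally have "inv a \<otimes> b [^] n \<otimes> a = b [^] n \<otimes> ?e [^] n" .
  then have "a \<otimes> (inv a \<otimes> b [^] n \<otimes> a) = a \<otimes> (b [^] n \<otimes> ?e [^] n)" by simp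
  then show ?thesis using a b e by (simp add: m_assoc)
qed

lemma class2:
  assumes a: "a \<in> carrier G" and b: "b \<in> carrier G"
    and ea: "cm G b a \<otimes> a = a \<otimes> cm G b a" and eb: "cm G b a \<otimes> b = b \<otimes> cm G b a"
  shows "(a \<otimes> b) [^] (n::nat) = a [^] n \<otimes> b [^] n \<otimes> cm G b a [^] (n * (n - 1) div 2)"
proof (induction n)
  case 0 then show ?case by simp
next
  case (Suc n)
  let ?e = "cm G b a"
  have e: "?e \<in> carrier G" using a b by simp
  have "(a \<otimes> b) [^] Suc n = a [^] n \<otimes> b [^] n \<otimes> ?e [^] (n * (n - 1) div 2) \<otimes> (a \<otimes> b)"
    using Suc by simp
  also have "\<dots> = a [^] n \<otimes> (b [^] n \<otimes> a) \<otimes> b \<otimes> ?e [^] (n * (n - 1) div 2)"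
  proof -
    let ?E = "?e [^] (n * (n - 1) div 2)"
    have E: "?E \<in> carrier G" using e by simp
    have Ea: "?E \<otimes> a = a \<otimes> ?E" using pow_comm1[OF a e] ea by simp
    have Eb: "?E \<otimes> b = b \<otimes> ?E" using pow_comm1[OF b e] eb by simp
    have "a [^] n \<otimes> b [^] n \<otimes> ?E \<otimes> (a \<otimes> b) = a [^] n \<otimes> (b [^] n \<otimes> (?E \<otimes> (a \<otimes> b)))"
      using a b E by (simp add: m_assoc)
    moreover have "?E \<otimes> (a \<otimes> b) = a \<otimes> (b \<otimes> ?E)"
      using a b E Ea Eb by (metis m_assoc)
    ultimately show ?thesis using a b E by (simp add: m_assoc)
  qed
  also have "\<dots> = a [^] n \<otimes> (a \<otimes> b [^] n \<otimes> ?e [^] n) \<otimes> b \<otimes> ?e [^] (n * (n - 1) div 2)"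
    using class2_aux[OF a b ea eb] by simp
  also have "\<dots> = a [^] Suc n \<otimes> b [^] Suc n \<otimes> (?e [^] n \<otimes> ?e [^] (n * (n - 1) div 2))"
  proof -
    have En: "?e [^] n \<otimes> b = b \<otimes> ?e [^] n" using pow_comm1[OF b e] eb by simp
    have "a [^] n \<otimes> (a \<otimes> b [^] n \<otimes> ?e [^] n) \<otimes> b \<otimes> ?e [^] (n * (n - 1) div 2)
        = (a [^] n \<otimes> a) \<otimes> (b [^] n \<otimes> (?e [^] n \<otimes> b)) \<otimes> ?e [^] (n * (n - 1) div 2)"
      using a b e by (simp add: m_assoc)
    also have "\<dots> = (a [^] n \<otimes> a) \<otimes> (b [^] n \<otimes> b) \<otimes> (?e [^] n \<otimes> ?e [^] (n * (n - 1) div 2))"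
      using a b e En by (simp add: m_assoc)
    finally show ?thesis by simp
  qed
  also have "\<dots> = a [^] Suc n \<otimes> b [^] Suc n \<otimes> ?e [^] (Suc n * (Suc n - 1) div 2)"
  proof -
    have "n + n * (n - 1) div 2 = Suc n * (Suc n - 1) div 2"
      by (cases n) auto
    then show ?thesis using e by (simp add: nat_pow_mult)
  qed
  finally show ?case .
qed

end



context group begin

lemma conj_pow: "a \<in> carrier G \<Longrightarrow> b \<in> carrier G \<Longrightarrow> inv a \<otimes> b [^] (n::nat) \<otimes> a = (inv a \<otimes> b \<otimes> a) [^] n"
proof (induction n)
  case 0 then show ?case by simp
next
  case (Suc n)
  have "inv a \<otimes> b [^] Suc n \<otimes> a = (inv a \<otimes> b [^] n \<otimes> a) \<otimes> (inv a \<otimes> b \<otimes> a)"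
    using Suc.prems by (simp add: m_assoc)
  then show ?case using Suc by simp
qed

lemma cm_pow:
  assumes c: "c \<in> carrier G" and x: "x \<in> carrier G" and d: "cm G c x \<otimes> c = c \<otimes> cm G c x"
  shows "cm G (c [^] (n::nat)) x = cm G c x [^] n"
proof -
  let ?d = "cm G c x"
  have dc: "?d \<in> carrier G" using c x by simp
  have "inv x \<otimes> c [^] n \<otimes> x = (c \<otimes> ?d) [^] n" using conj_pow[OF x c] conj_cm[OF x c] by simp
  also have "\<dots> = c [^] n \<otimes> ?d [^] n" using pow_comm_mult[OF c dc] d by simp
  finally have *: "inv x \<otimes> c [^] n \<otimes> x = c [^] n \<otimes> ?d [^] n" .
  have "cm G (c [^] n) x = inv (c [^] n) \<otimes> (inv x \<otimes> c [^] n \<otimes> x)"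
    using c x by (simp add: cm_def m_assoc)
  also have "\<dots> = ?d [^] n" using * c dc by (simp add: m_assoc)
  finally show ?thesis .
qed

lemma class2_p:
  assumes a: "a \<in> carrier G" and b: "b \<in> carrier G"
    and ea: "cm G b a \<otimes> a = a \<otimes> cm G b a" and eb: "cm G b a \<otimes> b = b \<otimes> cm G b a"
    and ep: "cm G b a [^] p = \<one>" and p: "odd p"
  shows "(a \<otimes> b) [^] (p::nat) = a [^] p \<otimes> b [^] p"
proof -
  obtain k where k: "p = 2 * k + 1" using p oddE by blast
  have pk: "p * (p - 1) div 2 = p * k" using k by simp
  have e: "cm G b a \<in> carrier G" using a b by simp
  have "cm G b a [^] (p * k) = (cm G b a [^] p) [^] k"
    using nat_pow_pow[OF e, of p k] by simp
  then have "cm G b a [^] (p * (p - 1) div 2) = \<one>"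
    using ep pk by simp
  moreover have "(a \<otimes> b) [^] p = a [^] p \<otimes> b [^] p \<otimes> cm G b a [^] (p * (p - 1) div 2)"
    by (rule class2[OF a b ea eb])
  ultimately show ?thesis using a b by simp
qed

lemma center_nontrivial:
  assumes fin: "finite (carrier G)" and p: "Factorial_Ring.prime (p::nat)" and ord: "order G = p ^ n" and n: "n > 0"
  shows "\<exists>z\<in>carrier G. z \<noteq> \<one> \<and> (\<forall>g\<in>carrier G. z \<otimes> g = g \<otimes> z)"
proof (rule ccontr)
  assume H: "\<not> ?thesis"
  let ?phi = "\<lambda>g. \<lambda>h\<in>carrier G. g \<otimes> h \<otimes> inv g"
  interpret A: group_action G "carrier G" ?phi by (rule action_by_conjugation)
  let ?O = "orbits G (carrier G) ?phi"
  have finO: "finite ?O"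
  proof -
    have "?O \<subseteq> Pow (carrier G)"
    proof
      fix orb assume "orb \<in> ?O"
      then have "orb \<subseteq> \<Union> ?O" by (rule Union_upper)
      then show "orb \<in> Pow (carrier G)" unfolding A.orbits_coverture by simp
    qed
    then show ?thesis using fin by (meson finite_Pow_iff finite_subset)
  qed
  have "(\<Sum>orb\<in>?O. card orb) = (\<Sum>orb\<in>?O. \<Sum>x\<in>orb. (1::nat))" by simp
  also have "\<dots> = (\<Sum>x\<in>carrier G. 1)" by (rule A.disjoint_sum[OF fin])
  also have "\<dots> = p ^ n" using ord by (simp add: order_def)
  finally have sum1: "(\<Sum>orb\<in>?O. card orb) = p ^ n" .
  have orb1: "orbit G ?phi \<one> = {\<one>}"
  proof -
    have "\<one> \<in> orbit G ?phi \<one>" using A.orbit_refl by simp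
    moreover have "orbit G ?phi \<one> \<subseteq> {\<one>}" unfolding orbit_def by auto
    ultimately show ?thesis by blast
  qed
  have o1: "{\<one>} \<in> ?O" unfolding orbits_def using orb1 by force
  have dv: "p dvd card orb" if hO: "orb \<in> ?O - {{\<one>}}" for orb
  proof -
    obtain x where x: "x \<in> carrier G" "orb = orbit G ?phi x"
    proof -
      have "orb \<in> ?O" using hO by simp
      then have "\<exists>x. orb = orbit G ?phi x \<and> x \<in> carrier G" unfolding orbits_def by (simp only: mem_Collect_eq)
      then show ?thesis using that by blast
    qed
    have "card orb * card (stabilizer G ?phi x) = p ^ n"
      using A.orbit_stabilizer_theorem[OF x(1)] x(2) ord by simp
    then have "card orb dvd p ^ n" by (rule dvdI[OF sym])
    then obtain i where i: "card orb = p ^ i" using divides_primepow_nat[OF p] by blast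
    show ?thesis
    proof (cases i)
      case 0
      then have c1: "card orb = 1" using i by simp
      have xo: "x \<in> orb" using A.orbit_refl[OF x(1)] x(2) by simp
      obtain y where "orb = {y}" using c1 card_1_singletonE by blast
      then have ox: "orb = {x}" using xo by simp
      have "x \<noteq> \<one>" using hO ox by auto
      moreover have "x \<otimes> g = g \<otimes> x" if g: "g \<in> carrier G" for g
      proof -
        have "?phi g x \<in> orb" unfolding x(2) orbit_def using g by blast
        then have "g \<otimes> x \<otimes> inv g = x" using ox x(1) by simp
        then have "g \<otimes> x \<otimes> inv g \<otimes> g = x \<otimes> g" by simp
        then show ?thesis using g x(1) by (simp add: m_assoc)
      qed
      ultimately show ?thesis using H x(1) by blast
    next
      case (Suc j)
      then show ?thesis using i by simp
    qed
  qed
  have "p dvd (\<Sum>orb\<in>?O - {{\<one>}}. card orb)" by (rule dvd_sum) (rule dv)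
  moreover have "(\<Sum>orb\<in>?O. card orb) = card {\<one>} + (\<Sum>orb\<in>?O - {{\<one>}}. card orb)"
    using sum.remove[OF finO o1, of card] by simp
  ultimately have "p dvd p ^ n - 1" using sum1 by simp
  moreover have "p dvd p ^ n" using n by simp
  moreover have "p ^ n \<ge> 1" using prime_gt_0_nat[OF p] by (simp add: Suc_leI)
  ultimately have "p dvd p ^ n - (p ^ n - 1)" using dvd_diff_nat by blast
  then have "p dvd 1" using \<open>p ^ n \<ge> 1\<close> by simp
  then show False using p by simp
qed

end



locale qt = group G for G (structure) + fixes M assumes nM: "M \<lhd> G"
begin

declare mult_FactGroup [simp del] one_FactGroup [simp del]

abbreviation "Q \<equiv> G Mod M"
abbreviation "pr \<equiv> (\<lambda>x. M #> x)"

lemma (in group) inv_comm_gen: "c \<in> carrier G \<Longrightarrow> b \<in> carrier G \<Longrightarrow> c \<otimes> b = b \<otimes> c \<Longrightarrow>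
  inv c \<otimes> b = b \<otimes> inv c"
proof -
  assume c: "c \<in> carrier G" and b: "b \<in> carrier G" and cb: "c \<otimes> b = b \<otimes> c"
  have "inv c \<otimes> b = inv c \<otimes> (b \<otimes> c) \<otimes> inv c" using c b by (simp add: m_assoc)
  also have "\<dots> = inv c \<otimes> (c \<otimes> b) \<otimes> inv c" using cb by simp
  also have "\<dots> = b \<otimes> inv c" using c b by (simp flip: m_assoc)
  finally show ?thesis .
qed

lemma (in group) int_pow_comm: "a \<in> carrier G \<Longrightarrow> b \<in> carrier G \<Longrightarrow> a \<otimes> b = b \<otimes> a \<Longrightarrow>
  a [^] (i::int) \<otimes> b = b \<otimes> a [^] i"
proof -
  assume a: "a \<in> carrier G" and b: "b \<in> carrier G" and ab: "a \<otimes> b = b \<otimes> a"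
  have n: "a [^] (n::nat) \<otimes> b = b \<otimes> a [^] n" for n using pow_comm1[OF b a ab[symmetric]] .
  have m: "inv (a [^] (n::nat)) \<otimes> b = b \<otimes> inv (a [^] n)" for n
    using inv_comm_gen[OF nat_pow_closed[OF a] b n] .
  show ?thesis
  proof (cases "i < 0")
    case True then show ?thesis using m[of "nat (- i)"] by (simp only: int_pow_def2 if_True)
  next
    case False then show ?thesis using n[of "nat i"] by (simp only: int_pow_def2 if_False)
  qed
qed

lemma Qgroup: "group Q" by (rule normal.factorgroup_is_group[OF nM])

lemma pr_hom: "group_hom G Q pr"
  unfolding group_hom_def group_hom_axioms_def
  using Qgroup normal.r_coset_hom_Mod[OF nM] by (simp add: is_group)

lemma subM: "subgroup M G" by (rule normal_imp_subgroup[OF nM])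

lemma pr_carrier [simp]: "x \<in> carrier G \<Longrightarrow> pr x \<in> carrier Q"
  by (rule group_hom.hom_closed[OF pr_hom])

lemma Q_one: "\<one>\<^bsub>Q\<^esub> = M" by (rule one_FactGroup)

lemma pr_one_iff: "x \<in> carrier G \<Longrightarrow> pr x = \<one>\<^bsub>Q\<^esub> \<longleftrightarrow> x \<in> M"
proof -
  assume x: "x \<in> carrier G"
  show ?thesis
  proof
    assume "pr x = \<one>\<^bsub>Q\<^esub>"
    then have "M #> x = M" by (simp add: Q_one)
    then show "x \<in> M" using rcos_self[OF x subM] by simp
  next
    assume "x \<in> M"
    then show "pr x = \<one>\<^bsub>Q\<^esub>" using subgroup.rcos_const[OF subM is_group] by (simp add: Q_one)
  qed
qed

lemma pr_mult: "x \<in> carrier G \<Longrightarrow> y \<in> carrier G \<Longrightarrow> pr (x \<otimes> y) = pr x \<otimes>\<^bsub>Q\<^esub> pr y"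
  by (rule group_hom.hom_mult[OF pr_hom])

lemma pr_inv: "x \<in> carrier G \<Longrightarrow> pr (inv x) = inv\<^bsub>Q\<^esub> pr x"
  by (rule group_hom.hom_inv[OF pr_hom])

lemma pr_pow: "x \<in> carrier G \<Longrightarrow> pr (x [^] (n::nat)) = pr x [^]\<^bsub>Q\<^esub> n"
  by (rule group_hom.hom_nat_pow[OF pr_hom])

lemma pr_ipow: "x \<in> carrier G \<Longrightarrow> pr (x [^] (n::int)) = pr x [^]\<^bsub>Q\<^esub> n"
  by (rule group_hom.hom_int_pow[OF pr_hom])

lemma pr_cm: "x \<in> carrier G \<Longrightarrow> y \<in> carrier G \<Longrightarrow> pr (cm G x y) = cm Q (pr x) (pr y)"
  by (simp add: cm_def pr_mult pr_inv)

lemma cm_in_M: "x \<in> carrier G \<Longrightarrow> y \<in> carrier G \<Longrightarrow>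
   cm G x y \<in> M \<longleftrightarrow> pr x \<otimes>\<^bsub>Q\<^esub> pr y = pr y \<otimes>\<^bsub>Q\<^esub> pr x"
  using pr_one_iff[of "cm G x y"] pr_cm group.cm_one_iff[OF Qgroup] by simp

lemma pr_eq_iff: "x \<in> carrier G \<Longrightarrow> y \<in> carrier G \<Longrightarrow> pr x = pr y \<longleftrightarrow> inv y \<otimes> x \<in> M"
proof -
  assume x: "x \<in> carrier G" and y: "y \<in> carrier G"
  have "pr (inv y \<otimes> x) = inv\<^bsub>Q\<^esub> pr y \<otimes>\<^bsub>Q\<^esub> pr x" using x y by (simp add: pr_mult pr_inv)
  moreover have "inv\<^bsub>Q\<^esub> pr y \<otimes>\<^bsub>Q\<^esub> pr x = \<one>\<^bsub>Q\<^esub> \<longleftrightarrow> pr x = pr y"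
    using x y group.inv_solve_left[OF Qgroup, of "pr x" "pr y" ] group.l_inv[OF Qgroup]
    by (metis Qgroup group.inv_closed group.inv_equality group.inv_inv pr_carrier)
  ultimately show ?thesis using pr_one_iff[of "inv y \<otimes> x"] x y by simp
qed

definition Mw :: "'a \<Rightarrow> 'a set" where
  "Mw w = {x \<in> carrier G. \<exists>i::int. pr x = pr w [^]\<^bsub>Q\<^esub> i}"

lemma Mw_subgroup: assumes w: "w \<in> carrier G" shows "subgroup (Mw w) G"
proof (rule subgroupI)
  show "Mw w \<subseteq> carrier G" unfolding Mw_def by auto
  show "Mw w \<noteq> {}"
  proof -
    have "pr \<one> = pr w [^]\<^bsub>Q\<^esub> (0::int)"
      using pr_one_iff[of \<one>] subM subgroup.one_closed by fastforce
    then show ?thesis unfolding Mw_def by blast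
  qed
  fix x y assume x: "x \<in> Mw w" and y: "y \<in> Mw w"
  obtain i :: int where i: "x \<in> carrier G" "pr x = pr w [^]\<^bsub>Q\<^esub> i" using x unfolding Mw_def by auto
  obtain j :: int where j: "y \<in> carrier G" "pr y = pr w [^]\<^bsub>Q\<^esub> j" using y unfolding Mw_def by auto
  have "pr (inv x) = pr w [^]\<^bsub>Q\<^esub> (- i)"
    using i w pr_inv group.int_pow_neg[OF Qgroup] by simp
  then show "inv x \<in> Mw w" unfolding Mw_def using i by auto
  have "pr (x \<otimes> y) = pr w [^]\<^bsub>Q\<^esub> (i + j)"
    using i j w pr_mult group.int_pow_mult[OF Qgroup] by simp
  then show "x \<otimes> y \<in> Mw w" unfolding Mw_def using i j by auto
qed

definition cent :: "'a \<Rightarrow> bool" where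
  "cent w \<longleftrightarrow> (\<forall>g\<in>carrier G. cm G w g \<in> M)"

lemma cent_Q: "w \<in> carrier G \<Longrightarrow> cent w \<Longrightarrow> U \<in> carrier Q \<Longrightarrow> pr w \<otimes>\<^bsub>Q\<^esub> U = U \<otimes>\<^bsub>Q\<^esub> pr w"
proof -
  assume w: "w \<in> carrier G" and c: "cent w" and U: "U \<in> carrier Q"
  obtain g where g: "g \<in> carrier G" "U = pr g" using U unfolding carrier_FactGroup by blast
  have "cm G w g \<in> M" using c g unfolding cent_def by blast
  then show ?thesis using cm_in_M[OF w g(1)] g(2) by simp
qed

lemma cent_pow: "w \<in> carrier G \<Longrightarrow> cent w \<Longrightarrow> cent (w [^] (n::nat))"
proof -
  assume w: "w \<in> carrier G" and c: "cent w"
  { fix g assume g: "g \<in> carrier G"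
    have "pr w [^]\<^bsub>Q\<^esub> n \<otimes>\<^bsub>Q\<^esub> pr g = pr g \<otimes>\<^bsub>Q\<^esub> pr w [^]\<^bsub>Q\<^esub> n"
      using group.pow_comm1[OF Qgroup pr_carrier[OF g] pr_carrier[OF w] sym[OF cent_Q[OF w c pr_carrier[OF g]]]] .
    then have "cm G (w [^] n) g \<in> M" using cm_in_M g w pr_pow by simp }
  then show ?thesis unfolding cent_def by blast
qed

lemma Mw_normal: assumes w: "w \<in> carrier G" and c: "cent w" shows "Mw w \<lhd> G"
proof (rule normal_invI[OF Mw_subgroup[OF w]])
  fix x h assume x: "x \<in> carrier G" and h: "h \<in> Mw w"
  obtain i :: int where i: "h \<in> carrier G" "pr h = pr w [^]\<^bsub>Q\<^esub> i" using h unfolding Mw_def by auto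
  have ci: "pr w [^]\<^bsub>Q\<^esub> i \<otimes>\<^bsub>Q\<^esub> pr x = pr x \<otimes>\<^bsub>Q\<^esub> pr w [^]\<^bsub>Q\<^esub> i"
    using group.int_pow_comm[OF Qgroup pr_carrier[OF w] pr_carrier[OF x] cent_Q[OF w c pr_carrier[OF x]]] .
  interpret QG: group Q by (rule Qgroup)
  have W: "pr w [^]\<^bsub>Q\<^esub> i \<in> carrier Q" using w by simp
  have X: "pr x \<in> carrier Q" using x by simp
  have "pr (x \<otimes> h \<otimes> inv x) = pr x \<otimes>\<^bsub>Q\<^esub> pr w [^]\<^bsub>Q\<^esub> i \<otimes>\<^bsub>Q\<^esub> inv\<^bsub>Q\<^esub> pr x"
    using x i by (simp add: pr_mult pr_inv)
  also have "\<dots> = pr w [^]\<^bsub>Q\<^esub> i \<otimes>\<^bsub>Q\<^esub> pr x \<otimes>\<^bsub>Q\<^esub> inv\<^bsub>Q\<^esub> pr x"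
    by (simp only: ci[symmetric])
  also have "\<dots> = pr w [^]\<^bsub>Q\<^esub> i" using W X by (simp add: QG.m_assoc)
  finally have "pr (x \<otimes> h \<otimes> inv x) = pr w [^]\<^bsub>Q\<^esub> i" .
  then show "x \<otimes> h \<otimes> inv x \<in> Mw w" unfolding Mw_def using x i by auto
qed


end



definition gensp :: "('a,'b) monoid_scheme \<Rightarrow> nat \<Rightarrow> 'a set \<Rightarrow> 'a set" where
  "gensp G p N = {x [^]\<^bsub>G\<^esub> p | x. x \<in> N} \<union> {cm G x g | x g. x \<in> N \<and> g \<in> carrier G}"

context qt begin

lemma pr_one_Q: "pr \<one> = \<one>\<^bsub>Q\<^esub>"
  using pr_one_iff[of \<one>] subgroup.one_closed[OF subM] by simp

lemma M_sub_Mw: "w \<in> carrier G \<Longrightarrow> M \<subseteq> Mw w"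
proof
  fix x assume w: "w \<in> carrier G" and x: "x \<in> M"
  have xc: "x \<in> carrier G" using x subgroup.subset[OF subM] by blast
  have "pr x = pr w [^]\<^bsub>Q\<^esub> (0::int)" using pr_one_iff[OF xc] x by simp
  then show "x \<in> Mw w" unfolding Mw_def using xc by blast
qed

lemma w_in_Mw: "w \<in> carrier G \<Longrightarrow> w \<in> Mw w"
proof -
  assume w: "w \<in> carrier G"
  have "pr w = pr w [^]\<^bsub>Q\<^esub> (1::int)" using group.int_pow_1[OF Qgroup] w by simp
  then show ?thesis unfolding Mw_def using w by blast
qed

lemma Mw_one: "Mw \<one> = M"
proof
  show "M \<subseteq> Mw \<one>" using M_sub_Mw by simp
  show "Mw \<one> \<subseteq> M"
  proof
    fix x assume "x \<in> Mw \<one>"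
    then obtain i :: int where x: "x \<in> carrier G" "pr x = pr \<one> [^]\<^bsub>Q\<^esub> i" unfolding Mw_def by blast
    then have "pr x = \<one>\<^bsub>Q\<^esub>" using pr_one_Q group.int_pow_one[OF Qgroup] by simp
    then show "x \<in> M" using pr_one_iff[OF x(1)] by simp
  qed
qed

lemma Mw_step:
  assumes w: "w \<in> carrier G" and c: "cent w" and N: "N \<subseteq> Mw w"
    and hyp: "N \<subseteq> generate G (gensp G p N \<union> M)"
  shows "N \<subseteq> Mw (w [^] (p::nat))"
proof -
  interpret QG: group Q by (rule Qgroup)
  have wp: "w [^] p \<in> carrier G" using w by simp
  have "gensp G p N \<union> M \<subseteq> Mw (w [^] p)"
  proof
    fix y assume y: "y \<in> gensp G p N \<union> M"
    show "y \<in> Mw (w [^] p)"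
    proof (cases "y \<in> M")
      case True then show ?thesis using M_sub_Mw[OF wp] by blast
    next
      case False
      then have "y \<in> gensp G p N" using y by blast
      then consider (pw) x where "x \<in> N" "y = x [^] p" | (cmm) x g where "x \<in> N" "g \<in> carrier G" "y = cm G x g"
        unfolding gensp_def by blast
      then show ?thesis
      proof cases
        case pw
        obtain i :: int where i: "x \<in> carrier G" "pr x = pr w [^]\<^bsub>Q\<^esub> i" using pw(1) N unfolding Mw_def by blast
        have "pr y = (pr w [^]\<^bsub>Q\<^esub> i) [^]\<^bsub>Q\<^esub> p" using pw(2) i pr_pow by simp
        also have "\<dots> = (pr w [^]\<^bsub>Q\<^esub> i) [^]\<^bsub>Q\<^esub> (int p)" by (simp add: int_pow_int)
        also have "\<dots> = pr w [^]\<^bsub>Q\<^esub> (i * int p)" using w by (simp add: QG.int_pow_pow)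
        also have "\<dots> = (pr w [^]\<^bsub>Q\<^esub> (int p)) [^]\<^bsub>Q\<^esub> i" using w by (simp add: QG.int_pow_pow mult.commute)
        also have "\<dots> = pr (w [^] p) [^]\<^bsub>Q\<^esub> i" using w pr_pow by (simp add: int_pow_int)
        finally show ?thesis unfolding Mw_def using i pw(2) by blast
      next
        case cmm
        obtain i :: int where i: "x \<in> carrier G" "pr x = pr w [^]\<^bsub>Q\<^esub> i" using cmm(1) N unfolding Mw_def by blast
        have com: "pr w [^]\<^bsub>Q\<^esub> i \<otimes>\<^bsub>Q\<^esub> pr g = pr g \<otimes>\<^bsub>Q\<^esub> pr w [^]\<^bsub>Q\<^esub> i"
          using QG.int_pow_comm[OF pr_carrier[OF w] pr_carrier[OF cmm(2)] cent_Q[OF w c pr_carrier[OF cmm(2)]]] .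
        have "pr y = cm Q (pr w [^]\<^bsub>Q\<^esub> i) (pr g)" using cmm i pr_cm by simp
        also have "\<dots> = \<one>\<^bsub>Q\<^esub>" using QG.cm_one_iff[of "pr w [^]\<^bsub>Q\<^esub> i" "pr g"] com w cmm(2) by simp
        also have "\<dots> = pr (w [^] p) [^]\<^bsub>Q\<^esub> (0::int)" by simp
        finally have eq: "pr y = pr (w [^] p) [^]\<^bsub>Q\<^esub> (0::int)" .
        have "y \<in> carrier G" using cmm i w by simp
        then show ?thesis unfolding Mw_def using eq by blast
      qed
    qed
  qed
  then have "generate G (gensp G p N \<union> M) \<subseteq> Mw (w [^] p)"
    by (rule generate_subgroup_incl[OF _ Mw_subgroup[OF wp]])
  then show ?thesis using hyp by blast
qed

end

context group begin

lemma qt_intro: "M \<lhd> G \<Longrightarrow> qt G M"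
  by (intro qt.intro qt_axioms.intro is_group)

lemma rel_center:
  assumes fin: "finite (carrier G)" and p: "Factorial_Ring.prime (p::nat)" and ord: "order G = p ^ n"
    and nM: "M \<lhd> G" and ne: "M \<noteq> carrier G"
  shows "\<exists>z\<in>carrier G. z \<notin> M \<and> qt.cent G M z"
proof -
  interpret q: qt G M by (rule qt_intro[OF nM])
  interpret Q: group "G Mod M" by (rule q.Qgroup)
  have cQ: "carrier (G Mod M) = rcosets M" by (simp add: FactGroup_def)
  have finQ: "finite (carrier (G Mod M))" using fin unfolding carrier_FactGroup by simp
  have "card (rcosets M) * card M = order G" by (rule lagrange[OF q.subM])
  then have "order (G Mod M) dvd p ^ n" using ord cQ unfolding order_def by (metis dvd_triv_left)
  then obtain i where i: "order (G Mod M) = p ^ i" using divides_primepow_nat[OF p] by blast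
  have i0: "i > 0"
  proof (rule ccontr)
    assume "\<not> i > 0"
    then have o1: "card (carrier (G Mod M)) = 1" using i unfolding order_def by simp
    have "carrier G \<subseteq> M"
    proof
      fix g assume g: "g \<in> carrier G"
      have "q.pr g \<in> carrier (G Mod M)" using g by simp
      moreover have "\<one>\<^bsub>G Mod M\<^esub> \<in> carrier (G Mod M)" by simp
      ultimately have "q.pr g = \<one>\<^bsub>G Mod M\<^esub>" using o1 by (metis card_1_singletonE singletonD)
      then show "g \<in> M" using q.pr_one_iff[OF g] by simp
    qed
    then show False using ne subgroup.subset[OF q.subM] by blast
  qed
  obtain Z where Z: "Z \<in> carrier (G Mod M)" "Z \<noteq> \<one>\<^bsub>G Mod M\<^esub>"
    "\<forall>U\<in>carrier (G Mod M). Z \<otimes>\<^bsub>G Mod M\<^esub> U = U \<otimes>\<^bsub>G Mod M\<^esub> Z"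
    using Q.center_nontrivial[OF finQ p i i0] by blast
  obtain z where z: "z \<in> carrier G" "Z = q.pr z" using Z(1) unfolding carrier_FactGroup by blast
  have "z \<notin> M" using q.pr_one_iff[OF z(1)] Z(2) z(2) by simp
  moreover have "q.cent z" unfolding q.cent_def
  proof
    fix g assume g: "g \<in> carrier G"
    have "q.pr z \<otimes>\<^bsub>G Mod M\<^esub> q.pr g = q.pr g \<otimes>\<^bsub>G Mod M\<^esub> q.pr z" using Z(3) z(2) g by simp
    then show "cm G z g \<in> M" using q.cm_in_M[OF z(1) g] by simp
  qed
  ultimately show ?thesis using z(1) by blast
qed

lemma fpp:
  assumes fin: "finite (carrier G)" and p: "Factorial_Ring.prime (p::nat)" and ord: "order G = p ^ n"
    and Nc: "N \<subseteq> carrier G"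
  shows "M \<lhd> G \<Longrightarrow> N \<subseteq> generate G (gensp G p N \<union> M) \<Longrightarrow> N \<subseteq> M"
proof (induction "card (carrier G) - card M" arbitrary: M rule: less_induct)
  case less
  show ?case
  proof (cases "M = carrier G")
    case True
    then show ?thesis using Nc by simp
  next
    case False
    obtain z where z: "z \<in> carrier G" "z \<notin> M" "qt.cent G M z"
      using rel_center[OF fin p ord less.prems(1) False] by blast
    interpret q: qt G M by (rule qt_intro[OF less.prems(1)])
    have nMz: "q.Mw z \<lhd> G" by (rule q.Mw_normal[OF z(1) z(3)])
    have sub: "M \<subseteq> q.Mw z" by (rule q.M_sub_Mw[OF z(1)])
    have "z \<in> q.Mw z" by (rule q.w_in_Mw[OF z(1)])
    then have ps: "M \<subset> q.Mw z" using sub z(2) by blast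
    have finMz: "finite (q.Mw z)" using fin subgroup.subset[OF normal_imp_subgroup[OF nMz]] finite_subset by blast
    have "card M < card (q.Mw z)" by (rule psubset_card_mono[OF finMz ps])
    moreover have "card (q.Mw z) \<le> card (carrier G)"
      using fin subgroup.subset[OF normal_imp_subgroup[OF nMz]] card_mono by blast
    ultimately have lt: "card (carrier G) - card (q.Mw z) < card (carrier G) - card M" by linarith
    have "N \<subseteq> generate G (gensp G p N \<union> q.Mw z)"
      using less.prems(2) mono_generate[of "gensp G p N \<union> M" "gensp G p N \<union> q.Mw z"] sub by blast
    then have N0: "N \<subseteq> q.Mw z" using less.hyps[OF lt nMz] by blast
    have Nj: "N \<subseteq> q.Mw (z [^] (p ^ j))" for j
    proof (induction j)
      case 0 then show ?case using N0 z(1) by simp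
    next
      case (Suc j)
      have zj: "z [^] (p ^ j) \<in> carrier G" using z(1) by simp
      have "N \<subseteq> q.Mw ((z [^] (p ^ j)) [^] p)"
        by (rule q.Mw_step[OF zj q.cent_pow[OF z(1) z(3)] Suc.IH less.prems(2)])
      moreover have "(z [^] (p ^ j)) [^] p = z [^] (p ^ Suc j)"
        using z(1) by (simp add: nat_pow_pow mult.commute)
      ultimately show ?case by simp
    qed
    have "z [^] (p ^ n) = \<one>" using pow_order_eq_1[OF z(1)] ord by simp
    then show ?thesis using Nj[of n] q.Mw_one by simp
  qed
qed

end



definition pws :: "('a,'b) monoid_scheme \<Rightarrow> nat \<Rightarrow> 'a set \<Rightarrow> 'a set" where
  "pws G p H = generate G {x [^]\<^bsub>G\<^esub> p | x. x \<in> H}"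

definition cms :: "('a,'b) monoid_scheme \<Rightarrow> 'a set \<Rightarrow> 'a set" where
  "cms G H = {cm G x g | x g. x \<in> H \<and> g \<in> carrier G}"

context group begin

lemma conj_mult: "h \<in> carrier G \<Longrightarrow> a \<in> carrier G \<Longrightarrow> b \<in> carrier G \<Longrightarrow>
  h \<otimes> (a \<otimes> b) \<otimes> inv h = (h \<otimes> a \<otimes> inv h) \<otimes> (h \<otimes> b \<otimes> inv h)"
  by (simp add: m_assoc)

lemma conj_inv: "h \<in> carrier G \<Longrightarrow> a \<in> carrier G \<Longrightarrow>
  h \<otimes> inv a \<otimes> inv h = inv (h \<otimes> a \<otimes> inv h)"
  by (simp add: inv_mult_group m_assoc)

lemma conj_cm': "h \<in> carrier G \<Longrightarrow> a \<in> carrier G \<Longrightarrow> g \<in> carrier G \<Longrightarrow>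
  h \<otimes> cm G a g \<otimes> inv h = cm G (h \<otimes> a \<otimes> inv h) (h \<otimes> g \<otimes> inv h)"
proof -
  assume h: "h \<in> carrier G" and a: "a \<in> carrier G" and g: "g \<in> carrier G"
  have "h \<otimes> cm G a g \<otimes> inv h = h \<otimes> (inv a \<otimes> inv g \<otimes> a \<otimes> g) \<otimes> inv h" by (simp add: cm_def)
  also have "\<dots> = (h \<otimes> inv a \<otimes> inv h) \<otimes> (h \<otimes> inv g \<otimes> inv h) \<otimes> (h \<otimes> a \<otimes> inv h) \<otimes> (h \<otimes> g \<otimes> inv h)"
    using h a g by (simp add: m_assoc)
  also have "\<dots> = cm G (h \<otimes> a \<otimes> inv h) (h \<otimes> g \<otimes> inv h)"
    using h a g by (simp only: conj_inv cm_def)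
  finally show ?thesis .
qed

lemma conj_pow': "h \<in> carrier G \<Longrightarrow> a \<in> carrier G \<Longrightarrow>
  h \<otimes> a [^] (n::nat) \<otimes> inv h = (h \<otimes> a \<otimes> inv h) [^] n"
  using conj_pow[of "inv h" a n] by simp

lemma pws_normal: assumes nH: "H \<lhd> G" shows "pws G p H \<lhd> G"
  unfolding pws_def
proof (rule normal_generateI)
  have Hc: "H \<subseteq> carrier G" using subgroup.subset[OF normal_imp_subgroup[OF nH]] .
  then show "{x [^] p | x. x \<in> H} \<subseteq> carrier G" by auto
  fix y g assume y: "y \<in> {x [^] p | x. x \<in> H}" and g: "g \<in> carrier G"
  then obtain x where x: "x \<in> H" "y = x [^] p" by blast
  have xc: "x \<in> carrier G" using x Hc by blast
  have "g \<otimes> y \<otimes> inv g = (g \<otimes> x \<otimes> inv g) [^] p" using conj_pow'[OF g xc] x by simp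
  moreover have "g \<otimes> x \<otimes> inv g \<in> H" using normal.inv_op_closed2[OF nH g x(1)] .
  ultimately show "g \<otimes> y \<otimes> inv g \<in> {x [^] p | x. x \<in> H}" by blast
qed

lemma cms_conj: assumes nH: "H \<lhd> G" and y: "y \<in> cms G H" and h: "h \<in> carrier G"
  shows "h \<otimes> y \<otimes> inv h \<in> cms G H"
proof -
  have Hc: "H \<subseteq> carrier G" using subgroup.subset[OF normal_imp_subgroup[OF nH]] .
  obtain x g where x: "x \<in> H" "g \<in> carrier G" "y = cm G x g" using y unfolding cms_def by blast
  have xc: "x \<in> carrier G" using x Hc by blast
  have "h \<otimes> y \<otimes> inv h = cm G (h \<otimes> x \<otimes> inv h) (h \<otimes> g \<otimes> inv h)" using conj_cm'[OF h xc x(2)] x by simp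
  moreover have "h \<otimes> x \<otimes> inv h \<in> H" using normal.inv_op_closed2[OF nH h x(1)] .
  moreover have "h \<otimes> g \<otimes> inv h \<in> carrier G" using h x by simp
  ultimately show "h \<otimes> y \<otimes> inv h \<in> cms G H" unfolding cms_def by blast
qed

lemma cms_carrier: "H \<subseteq> carrier G \<Longrightarrow> cms G H \<subseteq> carrier G"
  unfolding cms_def by auto

lemma cms_normal: assumes nH: "H \<lhd> G" shows "generate G (cms G H) \<lhd> G"
  by (rule normal_generateI[OF cms_carrier[OF subgroup.subset[OF normal_imp_subgroup[OF nH]]] cms_conj[OF nH]])

lemma normal_conj_closed: "H \<lhd> G \<Longrightarrow> y \<in> H \<Longrightarrow> h \<in> carrier G \<Longrightarrow> h \<otimes> y \<otimes> inv h \<in> H"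
  by (rule normal.inv_op_closed2)

lemma normal_union_cms: assumes nK: "K \<lhd> G" and nH: "H \<lhd> G"
  shows "generate G (K \<union> cms G H) \<lhd> G"
proof (rule normal_generateI)
  have Hc: "H \<subseteq> carrier G" using subgroup.subset[OF normal_imp_subgroup[OF nH]] .
  have Kc: "K \<subseteq> carrier G" using subgroup.subset[OF normal_imp_subgroup[OF nK]] .
  show "K \<union> cms G H \<subseteq> carrier G" using Kc cms_carrier[OF Hc] by blast
  fix y h assume y: "y \<in> K \<union> cms G H" and h: "h \<in> carrier G"
  show "h \<otimes> y \<otimes> inv h \<in> K \<union> cms G H"
  proof (cases "y \<in> K")
    case True then show ?thesis using normal_conj_closed[OF nK True h] by blast
  next
    case False
    then have "y \<in> cms G H" using y by blast
    then show ?thesis using cms_conj[OF nH _ h] by blast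
  qed
qed

end



context group begin

lemma normal_subset: "H \<lhd> G \<Longrightarrow> H \<subseteq> carrier G"
  by (rule subgroup.subset[OF normal_imp_subgroup])

lemma pws_carrier: "H \<subseteq> carrier G \<Longrightarrow> pws G p H \<subseteq> carrier G"
  unfolding pws_def by (rule generate_incl) auto

lemma pow_in_pws: "x \<in> H \<Longrightarrow> x [^] p \<in> pws G p H"
  unfolding pws_def by (rule generate.incl) blast

lemma cm_in_gen_cms: "x \<in> H \<Longrightarrow> g \<in> carrier G \<Longrightarrow> cm G x g \<in> generate G (cms G H)"
  unfolding cms_def by (rule generate.incl) blast

lemma comm_sub_subgroup:
  assumes nM: "M \<lhd> G"
  shows "subgroup {a \<in> carrier G. \<forall>g\<in>carrier G. cm G a g \<in> M} G"
proof -
  interpret q: qt G M by (rule qt_intro[OF nM])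
  interpret QG: group q.Q by (rule q.Qgroup)
  show ?thesis
  proof (rule subgroupI)
    show "{a \<in> carrier G. \<forall>g\<in>carrier G. cm G a g \<in> M} \<subseteq> carrier G" by blast
    have "cm G \<one> g \<in> M" if "g \<in> carrier G" for g
      using that subgroup.one_closed[OF q.subM] by (simp add: cm_def)
    then show "{a \<in> carrier G. \<forall>g\<in>carrier G. cm G a g \<in> M} \<noteq> {}" by blast
  next
    fix a assume a: "a \<in> {a \<in> carrier G. \<forall>g\<in>carrier G. cm G a g \<in> M}"
    have "cm G (inv a) g \<in> M" if g: "g \<in> carrier G" for g
    proof -
      have "q.pr a \<otimes>\<^bsub>q.Q\<^esub> q.pr g = q.pr g \<otimes>\<^bsub>q.Q\<^esub> q.pr a" using a g q.cm_in_M by blast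
      then have "inv\<^bsub>q.Q\<^esub> q.pr a \<otimes>\<^bsub>q.Q\<^esub> q.pr g = q.pr g \<otimes>\<^bsub>q.Q\<^esub> inv\<^bsub>q.Q\<^esub> q.pr a"
        using QG.inv_comm_gen a g by simp
      then show ?thesis using q.cm_in_M a g q.pr_inv by simp
    qed
    then show "inv a \<in> {a \<in> carrier G. \<forall>g\<in>carrier G. cm G a g \<in> M}" using a by simp
  next
    fix a b assume a: "a \<in> {a \<in> carrier G. \<forall>g\<in>carrier G. cm G a g \<in> M}"
      and b: "b \<in> {a \<in> carrier G. \<forall>g\<in>carrier G. cm G a g \<in> M}"
    have "cm G (a \<otimes> b) g \<in> M" if g: "g \<in> carrier G" for g
    proof -
      have ca: "q.pr a \<otimes>\<^bsub>q.Q\<^esub> q.pr g = q.pr g \<otimes>\<^bsub>q.Q\<^esub> q.pr a" using a g q.cm_in_M by blast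
      have cb: "q.pr b \<otimes>\<^bsub>q.Q\<^esub> q.pr g = q.pr g \<otimes>\<^bsub>q.Q\<^esub> q.pr b" using b g q.cm_in_M by blast
      have A: "q.pr a \<in> carrier q.Q" and B: "q.pr b \<in> carrier q.Q" and C: "q.pr g \<in> carrier q.Q"
        using a b g by auto
      have "(q.pr a \<otimes>\<^bsub>q.Q\<^esub> q.pr b) \<otimes>\<^bsub>q.Q\<^esub> q.pr g = q.pr a \<otimes>\<^bsub>q.Q\<^esub> (q.pr b \<otimes>\<^bsub>q.Q\<^esub> q.pr g)"
        using A B C by (simp add: QG.m_assoc)
      also have "\<dots> = q.pr a \<otimes>\<^bsub>q.Q\<^esub> (q.pr g \<otimes>\<^bsub>q.Q\<^esub> q.pr b)" by (simp only: cb)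
      also have "\<dots> = (q.pr a \<otimes>\<^bsub>q.Q\<^esub> q.pr g) \<otimes>\<^bsub>q.Q\<^esub> q.pr b" using A B C by (simp add: QG.m_assoc)
      also have "\<dots> = (q.pr g \<otimes>\<^bsub>q.Q\<^esub> q.pr a) \<otimes>\<^bsub>q.Q\<^esub> q.pr b" by (simp only: ca)
      also have "\<dots> = q.pr g \<otimes>\<^bsub>q.Q\<^esub> (q.pr a \<otimes>\<^bsub>q.Q\<^esub> q.pr b)" using A B C by (simp add: QG.m_assoc)
      finally show ?thesis using q.cm_in_M a b g q.pr_mult by simp
    qed
    then show "a \<otimes> b \<in> {a \<in> carrier G. \<forall>g\<in>carrier G. cm G a g \<in> M}" using a b by simp
  qed
qed

lemma pe_step:
  assumes fin: "finite (carrier G)" and p: "Factorial_Ring.prime (p::nat)" and op: "odd p"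
    and ord: "order G = p ^ n" and nN: "N \<lhd> G"
    and pe: "\<forall>x\<in>N. \<forall>g\<in>carrier G. cm G x g \<in> pws G p N"
  shows "\<forall>a\<in>pws G p N. \<forall>g\<in>carrier G. cm G a g \<in> pws G p (pws G p N)"
proof -
  let ?A = "pws G p N"
  let ?K = "pws G p ?A"
  let ?L = "generate G (cms G ?A)"
  let ?M = "generate G (?K \<union> cms G ?L)"
  have nA: "?A \<lhd> G" by (rule pws_normal[OF nN])
  have nK: "?K \<lhd> G" by (rule pws_normal[OF nA])
  have nL: "?L \<lhd> G" by (rule cms_normal[OF nA])
  have nM: "?M \<lhd> G" by (rule normal_union_cms[OF nK nL])
  have Nc: "N \<subseteq> carrier G" by (rule normal_subset[OF nN])
  have Ac: "?A \<subseteq> carrier G" by (rule normal_subset[OF nA])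
  have Lc: "?L \<subseteq> carrier G" by (rule normal_subset[OF nL])
  interpret q: qt G ?M by (rule qt_intro[OF nM])
  interpret QG: group q.Q by (rule q.Qgroup)
  have KM: "?K \<subseteq> ?M" using generate.incl[of _ "?K \<union> cms G ?L" G] by blast
  have LM: "cm G l g \<in> ?M" if "l \<in> ?L" "g \<in> carrier G" for l g
    using generate.incl[of "cm G l g" "?K \<union> cms G ?L" G] that unfolding cms_def by blast
  have claim1: "cm G (x [^] p) g \<in> ?M" if x: "x \<in> N" and g: "g \<in> carrier G" for x g
  proof -
    have xc: "x \<in> carrier G" using x Nc by blast
    let ?X = "q.pr x" and ?Y = "q.pr g" and ?c = "cm G x g"
    have cA: "?c \<in> ?A" using pe x g by blast
    have cc: "?c \<in> carrier G" using xc g by simp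
    let ?C = "q.pr ?c"
    have X: "?X \<in> carrier q.Q" and Y: "?Y \<in> carrier q.Q" and C: "?C \<in> carrier q.Q" using xc g cc by auto
    have conj: "inv\<^bsub>q.Q\<^esub> ?Y \<otimes>\<^bsub>q.Q\<^esub> ?X \<otimes>\<^bsub>q.Q\<^esub> ?Y = ?X \<otimes>\<^bsub>q.Q\<^esub> ?C"
      using QG.conj_cm[OF Y X] q.pr_cm[OF xc g] by simp
    have ecL: "cm G ?c x \<in> ?L" using cm_in_gen_cms[OF cA xc] .
    have ecc: "cm G ?c x \<in> carrier G" using cc xc by simp
    have ecent: "q.pr (cm G ?c x) \<otimes>\<^bsub>q.Q\<^esub> q.pr h = q.pr h \<otimes>\<^bsub>q.Q\<^esub> q.pr (cm G ?c x)" if h: "h \<in> carrier G" for h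
      using q.cm_in_M[OF ecc h] LM[OF ecL h] by simp
    have e: "cm q.Q ?C ?X = q.pr (cm G ?c x)" using q.pr_cm[OF cc xc] by simp
    have eC: "cm q.Q ?C ?X \<otimes>\<^bsub>q.Q\<^esub> ?C = ?C \<otimes>\<^bsub>q.Q\<^esub> cm q.Q ?C ?X" using e ecent[OF cc] by simp
    have eX: "cm q.Q ?C ?X \<otimes>\<^bsub>q.Q\<^esub> ?X = ?X \<otimes>\<^bsub>q.Q\<^esub> cm q.Q ?C ?X" using e ecent[OF xc] by simp
    have cpK: "?c [^] p \<in> ?K" by (rule pow_in_pws[OF cA])
    have Cp: "?C [^]\<^bsub>q.Q\<^esub> p = \<one>\<^bsub>q.Q\<^esub>"
      using q.pr_pow[OF cc, of p] q.pr_one_iff[of "?c [^] p"] cc cpK KM by auto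
    have ep: "cm q.Q ?C ?X [^]\<^bsub>q.Q\<^esub> p = \<one>\<^bsub>q.Q\<^esub>"
    proof -
      have "cm q.Q (?C [^]\<^bsub>q.Q\<^esub> p) ?X = cm q.Q ?C ?X [^]\<^bsub>q.Q\<^esub> p"
        by (rule QG.cm_pow[OF C X eC])
      then show ?thesis using Cp X by (simp add: cm_def)
    qed
    have "(?X \<otimes>\<^bsub>q.Q\<^esub> ?C) [^]\<^bsub>q.Q\<^esub> p = ?X [^]\<^bsub>q.Q\<^esub> p \<otimes>\<^bsub>q.Q\<^esub> ?C [^]\<^bsub>q.Q\<^esub> p"
      by (rule QG.class2_p[OF X C eX eC ep op])
    then have pw: "(?X \<otimes>\<^bsub>q.Q\<^esub> ?C) [^]\<^bsub>q.Q\<^esub> p = ?X [^]\<^bsub>q.Q\<^esub> p" using Cp X by simp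
    have "inv\<^bsub>q.Q\<^esub> ?Y \<otimes>\<^bsub>q.Q\<^esub> ?X [^]\<^bsub>q.Q\<^esub> p \<otimes>\<^bsub>q.Q\<^esub> ?Y = ?X [^]\<^bsub>q.Q\<^esub> p"
      using QG.conj_pow[OF Y X, of p] conj pw by simp
    then have "?X [^]\<^bsub>q.Q\<^esub> p \<otimes>\<^bsub>q.Q\<^esub> ?Y = ?Y \<otimes>\<^bsub>q.Q\<^esub> ?X [^]\<^bsub>q.Q\<^esub> p"
      using X Y by (metis QG.inv_cancel_r QG.m_assoc QG.m_closed QG.nat_pow_closed QG.inv_closed)
    then show ?thesis using q.cm_in_M[OF nat_pow_closed[OF xc] g] q.pr_pow[OF xc] by simp
  qed
  let ?S = "{a \<in> carrier G. \<forall>g\<in>carrier G. cm G a g \<in> ?M}"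
  have "{x [^] p | x. x \<in> N} \<subseteq> ?S" using claim1 Nc by auto
  then have gS: "generate G {x [^] p | x. x \<in> N} \<subseteq> ?S"
    by (rule generate_subgroup_incl[OF _ comm_sub_subgroup[OF nM]])
  have AS: "?A \<subseteq> ?S" using gS by (simp only: pws_def[of G p N])
  have "cms G ?A \<subseteq> ?M" using AS unfolding cms_def by blast
  then have LsM: "?L \<subseteq> ?M" by (rule generate_subgroup_incl[OF _ normal_imp_subgroup[OF nM]])
  have "?M \<subseteq> generate G (gensp G p ?L \<union> ?K)"
    by (rule mono_generate) (auto simp: gensp_def cms_def)
  then have "?L \<subseteq> generate G (gensp G p ?L \<union> ?K)" using LsM by blast
  then have LK: "?L \<subseteq> ?K" by (rule fpp[OF fin p ord Lc nK])
  show ?thesis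
  proof (intro ballI)
    fix a g assume "a \<in> ?A" "g \<in> carrier G"
    then show "cm G a g \<in> ?K" using cm_in_gen_cms LK by blast
  qed
qed

end



primrec NS :: "('a,'b) monoid_scheme \<Rightarrow> nat \<Rightarrow> nat \<Rightarrow> 'a set" where
  "NS G p 0 = carrier G"
| "NS G p (Suc k) = pws G p (NS G p k)"

declare NS.simps [simp del]

context group begin

lemma subgroup_pow_closed: "subgroup H G \<Longrightarrow> x \<in> H \<Longrightarrow> x [^] (n::nat) \<in> H"
proof (induction n)
  case 0 then show ?case by (simp add: subgroup.one_closed)
next
  case (Suc n)
  then have "x [^] n \<otimes> x \<in> H" by (simp add: subgroup.m_closed)
  then show ?case by simp
qed

lemma NS_normal: "NS G p k \<lhd> G"
proof (induction k)
  case 0 then show ?case by (simp add: normal_self NS.simps)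
next
  case (Suc k) then show ?case by (simp add: pws_normal NS.simps)
qed

lemma NS_sub: "subgroup (NS G p k) G"
  by (rule normal_imp_subgroup[OF NS_normal])

lemma NS_carrier: "NS G p k \<subseteq> carrier G"
  by (rule normal_subset[OF NS_normal])

lemma NS_Suc_sub: "NS G p (Suc k) \<subseteq> NS G p k"
proof -
  have "{x [^] p | x. x \<in> NS G p k} \<subseteq> NS G p k"
    using subgroup_pow_closed[OF NS_sub] by blast
  then show ?thesis unfolding NS.simps pws_def by (rule generate_subgroup_incl[OF _ NS_sub])
qed

lemma NS_anti: "i \<le> j \<Longrightarrow> NS G p j \<subseteq> NS G p i"
proof (induction j)
  case 0 then show ?case by simp
next
  case (Suc j)
  show ?case
  proof (cases "i \<le> j")
    case True then show ?thesis using Suc NS_Suc_sub by blast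
  next
    case False then have "i = Suc j" using Suc by simp
    then show ?thesis by simp
  qed
qed

lemma A_k:
  assumes fin: "finite (carrier G)" and p: "Factorial_Ring.prime (p::nat)" and op: "odd p"
    and ord: "order G = p ^ n" and pw: "derived G (carrier G) \<subseteq> pth_power_subgroup p G"
  shows "\<forall>x\<in>NS G p k. \<forall>g\<in>carrier G. cm G x g \<in> NS G p (Suc k)"
proof (induction k)
  case 0
  show ?case
  proof (intro ballI)
    fix x g assume x: "x \<in> NS G p 0" and g: "g \<in> carrier G"
    then have xc: "x \<in> carrier G" by (simp add: NS.simps)
    have "cm G x g \<in> derived_set G (carrier G)"
    proof -
      have "cm G x g = inv x \<otimes> inv g \<otimes> inv (inv x) \<otimes> inv (inv g)" using xc g by (simp add: cm_def)
      then show ?thesis using xc g by blast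
    qed
    then have "cm G x g \<in> derived G (carrier G)" unfolding derived_def by (rule generate.incl)
    then show "cm G x g \<in> NS G p (Suc 0)" using pw unfolding pth_power_subgroup_def NS.simps pws_def by blast
  qed
next
  case (Suc k)
  then show ?case using pe_step[OF fin p op ord NS_normal[of p k]] unfolding NS.simps(2) by blast
qed

lemma B_k:
  assumes fin: "finite (carrier G)" and p: "Factorial_Ring.prime (p::nat)" and op: "odd p"
    and ord: "order G = p ^ n" and pw: "derived G (carrier G) \<subseteq> pth_power_subgroup p G"
    and c: "c \<in> carrier G" and u: "u \<in> NS G p k"
  shows "\<exists>w\<in>NS G p (Suc (Suc k)). c [^] p \<otimes> u [^] p = (c \<otimes> u) [^] p \<otimes> w"
proof -
  let ?M = "NS G p (Suc (Suc k))"
  have Ak: "\<And>k. \<forall>x\<in>NS G p k. \<forall>g\<in>carrier G. cm G x g \<in> NS G p (Suc k)"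
    by (rule A_k[OF fin p op ord pw])
  interpret q: qt G ?M by (rule qt_intro[OF NS_normal])
  interpret QG: group q.Q by (rule q.Qgroup)
  have uc: "u \<in> carrier G" using u NS_carrier by blast
  let ?a = "q.pr c" and ?b = "q.pr u" and ?e = "cm G u c"
  have a: "?a \<in> carrier q.Q" and b: "?b \<in> carrier q.Q" using c uc by auto
  have e1: "?e \<in> NS G p (Suc k)" using Ak u c by blast
  have ec: "?e \<in> carrier G" using uc c by simp
  have ecent: "q.pr ?e \<otimes>\<^bsub>q.Q\<^esub> q.pr h = q.pr h \<otimes>\<^bsub>q.Q\<^esub> q.pr ?e" if h: "h \<in> carrier G" for h
    using q.cm_in_M[OF ec h] Ak e1 h by blast
  have E: "cm q.Q ?b ?a = q.pr ?e" using q.pr_cm[OF uc c] by simp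
  have ea: "cm q.Q ?b ?a \<otimes>\<^bsub>q.Q\<^esub> ?a = ?a \<otimes>\<^bsub>q.Q\<^esub> cm q.Q ?b ?a" using E ecent[OF c] by simp
  have eb: "cm q.Q ?b ?a \<otimes>\<^bsub>q.Q\<^esub> ?b = ?b \<otimes>\<^bsub>q.Q\<^esub> cm q.Q ?b ?a" using E ecent[OF uc] by simp
  have "?e [^] p \<in> ?M" unfolding NS.simps(2)[of G p "Suc k"] using pow_in_pws[OF e1] .
  then have ep: "cm q.Q ?b ?a [^]\<^bsub>q.Q\<^esub> p = \<one>\<^bsub>q.Q\<^esub>"
    using E q.pr_pow[OF ec] q.pr_one_iff[of "?e [^] p"] ec by simp
  have "(?a \<otimes>\<^bsub>q.Q\<^esub> ?b) [^]\<^bsub>q.Q\<^esub> p = ?a [^]\<^bsub>q.Q\<^esub> p \<otimes>\<^bsub>q.Q\<^esub> ?b [^]\<^bsub>q.Q\<^esub> p"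
    by (rule QG.class2_p[OF a b ea eb ep op])
  then have "q.pr ((c \<otimes> u) [^] p) = q.pr (c [^] p \<otimes> u [^] p)"
    using c uc by (simp add: q.pr_pow q.pr_mult)
  then have "q.pr (c [^] p \<otimes> u [^] p) = q.pr ((c \<otimes> u) [^] p)" by (rule sym)
  then have w: "inv ((c \<otimes> u) [^] p) \<otimes> (c [^] p \<otimes> u [^] p) \<in> ?M"
    using q.pr_eq_iff c uc by simp
  have "c [^] p \<otimes> u [^] p = (c \<otimes> u) [^] p \<otimes> (inv ((c \<otimes> u) [^] p) \<otimes> (c [^] p \<otimes> u [^] p))"
    using c uc by simp
  then show ?thesis using w by blast
qed

lemma NS_term:
  assumes fin: "finite (carrier G)" and p: "Factorial_Ring.prime (p::nat)" and ord: "order G = p ^ n"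
  shows "NS G p (Suc (card (carrier G))) = {\<one>}"
proof -
  have "NS G p k = {\<one>} \<or> card (NS G p k) + k \<le> card (carrier G)" for k
  proof (induction k)
    case 0 then show ?case by (simp add: NS.simps)
  next
    case (Suc k)
    have sub: "NS G p (Suc k) \<subseteq> NS G p k" by (rule NS_Suc_sub)
    have one: "\<one> \<in> NS G p (Suc k)" by (rule subgroup.one_closed[OF NS_sub])
    show ?case
    proof (cases "NS G p k = {\<one>}")
      case True then show ?thesis using sub one by blast
    next
      case False
      then have ck: "card (NS G p k) + k \<le> card (carrier G)" using Suc by blast
      have "NS G p (Suc k) \<noteq> NS G p k"
      proof
        assume eq: "NS G p (Suc k) = NS G p k"
        have "NS G p k \<subseteq> generate G (gensp G p (NS G p k) \<union> {\<one>})"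
        proof -
          have "NS G p k = generate G {x [^] p | x. x \<in> NS G p k}" using eq by (simp add: pws_def NS.simps)
          also have "\<dots> \<subseteq> generate G (gensp G p (NS G p k) \<union> {\<one>})"
            by (rule mono_generate) (auto simp: gensp_def)
          finally show ?thesis .
        qed
        then have "NS G p k \<subseteq> {\<one>}" by (rule fpp[OF fin p ord NS_carrier one_is_normal])
        moreover have "\<one> \<in> NS G p k" by (rule subgroup.one_closed[OF NS_sub])
        ultimately show False using False by blast
      qed
      then have "NS G p (Suc k) \<subset> NS G p k" using sub by blast
      moreover have "finite (NS G p k)" using fin NS_carrier finite_subset by blast
      ultimately have "card (NS G p (Suc k)) < card (NS G p k)" by (rule psubset_card_mono[rotated])
      then show ?thesis using ck by simp
    qed
  qed
  then have D: "NS G p (Suc (card (carrier G))) = {\<one>} \<or>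
      card (NS G p (Suc (card (carrier G)))) + Suc (card (carrier G)) \<le> card (carrier G)" .
  show ?thesis
  proof (rule disjE[OF D])
    assume "card (NS G p (Suc (card (carrier G)))) + Suc (card (carrier G)) \<le> card (carrier G)"
    then show ?thesis by linarith
  qed
qed

lemma C_k:
  assumes fin: "finite (carrier G)" and p: "Factorial_Ring.prime (p::nat)" and op: "odd p"
    and ord: "order G = p ^ n" and pw: "derived G (carrier G) \<subseteq> pth_power_subgroup p G"
  shows "\<forall>c\<in>carrier G. \<forall>w\<in>NS G p (Suc k). \<forall>v\<in>NS G p (Suc (Suc k)). \<exists>d\<in>carrier G. c [^] p \<otimes> w \<otimes> v = d [^] p"
proof -
  let ?m = "Suc (card (carrier G))"
  let ?P = "\<lambda>k. \<forall>c\<in>carrier G. \<forall>w\<in>NS G p (Suc k). \<forall>v\<in>NS G p (Suc (Suc k)). \<exists>d\<in>carrier G. c [^] p \<otimes> w \<otimes> v = d [^] p"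
  have triv: "?P k" if "?m \<le> k" for k
  proof (intro ballI)
    fix c w v assume c: "c \<in> carrier G" and w: "w \<in> NS G p (Suc k)" and v: "v \<in> NS G p (Suc (Suc k))"
    have "NS G p (Suc k) \<subseteq> {\<one>}" "NS G p (Suc (Suc k)) \<subseteq> {\<one>}"
      using NS_anti[of ?m "Suc k" p] NS_anti[of ?m "Suc (Suc k)" p] that NS_term[OF fin p ord] by auto
    then have "w = \<one>" "v = \<one>" using w v by auto
    then show "\<exists>d\<in>carrier G. c [^] p \<otimes> w \<otimes> v = d [^] p" using c by auto
  qed
  have stp: "?P k" if IH: "?P (Suc k)" for k
  proof -
    have base: "\<exists>d\<in>carrier G. c [^] p \<otimes> v = d [^] p" if c: "c \<in> carrier G" and v: "v \<in> NS G p (Suc (Suc k))" for c v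
    proof -
      have "\<one> \<in> NS G p (Suc (Suc (Suc k)))" by (rule subgroup.one_closed[OF NS_sub])
      then obtain d where d: "d \<in> carrier G" "c [^] p \<otimes> v \<otimes> \<one> = d [^] p" using IH c v by blast
      have vc: "v \<in> carrier G" using v NS_carrier by blast
      have "c [^] p \<otimes> v = d [^] p" using d(2) c vc by simp
      then show ?thesis using d(1) by blast
    qed
    have main: "w \<in> generate G {x [^] p | x. x \<in> NS G p k} \<Longrightarrow>
      \<forall>c\<in>carrier G. \<forall>v\<in>NS G p (Suc (Suc k)). \<exists>d\<in>carrier G. c [^] p \<otimes> w \<otimes> v = d [^] p" for w
    proof (induction w rule: generate.induct)
      case one
      then show ?case using base by simp
    next
      case (incl h)
      then obtain u where u: "u \<in> NS G p k" "h = u [^] p" by blast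
      have uc: "u \<in> carrier G" using u NS_carrier by blast
      show ?case
      proof (intro ballI)
        fix c v assume c: "c \<in> carrier G" and v: "v \<in> NS G p (Suc (Suc k))"
        obtain w' where w': "w' \<in> NS G p (Suc (Suc k))" "c [^] p \<otimes> u [^] p = (c \<otimes> u) [^] p \<otimes> w'"
          using B_k[OF fin p op ord pw c u(1)] by blast
        have w'c: "w' \<in> carrier G" and vc: "v \<in> carrier G" using w' v NS_carrier by auto
        have "w' \<otimes> v \<in> NS G p (Suc (Suc k))" using w'(1) v subgroup.m_closed[OF NS_sub] by blast
        then obtain d where d: "d \<in> carrier G" "(c \<otimes> u) [^] p \<otimes> (w' \<otimes> v) = d [^] p"
          using base[of "c \<otimes> u"] c uc by blast
        have "c [^] p \<otimes> h \<otimes> v = (c \<otimes> u) [^] p \<otimes> (w' \<otimes> v)"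
          using u(2) w'(2) c uc w'c vc by (simp add: m_assoc)
        then show "\<exists>d\<in>carrier G. c [^] p \<otimes> h \<otimes> v = d [^] p" using d by auto
      qed
    next
      case (inv h)
      then obtain u where u: "u \<in> NS G p k" "h = u [^] p" by blast
      have uc: "u \<in> carrier G" using u NS_carrier by blast
      have iu: "inv u \<in> NS G p k" using u subgroup.m_inv_closed[OF NS_sub] by blast
      show ?case
      proof (intro ballI)
        fix c v assume c: "c \<in> carrier G" and v: "v \<in> NS G p (Suc (Suc k))"
        obtain w' where w': "w' \<in> NS G p (Suc (Suc k))" "c [^] p \<otimes> (inv u) [^] p = (c \<otimes> inv u) [^] p \<otimes> w'"
          using B_k[OF fin p op ord pw c iu] by blast
        have w'c: "w' \<in> carrier G" and vc: "v \<in> carrier G" using w' v NS_carrier by auto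
        have "w' \<otimes> v \<in> NS G p (Suc (Suc k))" using w'(1) v subgroup.m_closed[OF NS_sub] by blast
        then obtain d where d: "d \<in> carrier G" "(c \<otimes> inv u) [^] p \<otimes> (w' \<otimes> v) = d [^] p"
          using base[of "c \<otimes> inv u"] c uc by blast
        have "c [^] p \<otimes> inv h \<otimes> v = (c \<otimes> inv u) [^] p \<otimes> (w' \<otimes> v)"
          using u(2) w'(2) c uc w'c vc by (simp add: m_assoc nat_pow_inv)
        then show "\<exists>d\<in>carrier G. c [^] p \<otimes> inv h \<otimes> v = d [^] p" using d by auto
      qed
    next
      case (eng h1 h2)
      have gc: "generate G {x [^] p | x. x \<in> NS G p k} \<subseteq> carrier G"
        by (rule generate_incl) (use NS_carrier in auto)
      have h1c: "h1 \<in> carrier G" and h2c: "h2 \<in> carrier G" using eng.hyps gc by auto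
      have one2: "\<one> \<in> NS G p (Suc (Suc k))" by (rule subgroup.one_closed[OF NS_sub])
      show ?case
      proof (intro ballI)
        fix c v assume c: "c \<in> carrier G" and v: "v \<in> NS G p (Suc (Suc k))"
        have vc: "v \<in> carrier G" using v NS_carrier by auto
        obtain d1 where d1: "d1 \<in> carrier G" "c [^] p \<otimes> h1 \<otimes> \<one> = d1 [^] p" using eng.IH(1) c one2 by blast
        obtain d where d: "d \<in> carrier G" "d1 [^] p \<otimes> h2 \<otimes> v = d [^] p" using eng.IH(2) d1(1) v by blast
        have "c [^] p \<otimes> (h1 \<otimes> h2) \<otimes> v = (c [^] p \<otimes> h1 \<otimes> \<one>) \<otimes> h2 \<otimes> v"
          using c h1c h2c vc by (simp add: m_assoc)
        then show "\<exists>d\<in>carrier G. c [^] p \<otimes> (h1 \<otimes> h2) \<otimes> v = d [^] p" using d1 d by auto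
      qed
    qed
    show ?thesis using main unfolding NS.simps(2)[of G p k] pws_def by blast
  qed
  have le: "?P k" if "k \<le> ?m" for k
    using that
  proof (induction k rule: inc_induct)
    case base show ?case by (rule triv) simp
  next
    case (step k) show ?case by (rule stp[OF step(3)])
  qed
  show ?thesis
  proof (cases "k \<le> ?m")
    case True then show ?thesis by (rule le)
  next
    case False then show ?thesis using triv[of k] by simp
  qed
qed

lemma powerful_prod:
  assumes fin: "finite (carrier G)" and p: "Factorial_Ring.prime (p::nat)" and op: "odd p"
    and ord: "order G = p ^ n" and pw: "derived G (carrier G) \<subseteq> pth_power_subgroup p G"
    and x: "x \<in> carrier G" and y: "y \<in> carrier G"
  shows "\<exists>d\<in>carrier G. x [^] p \<otimes> y [^] p = d [^] p"
proof -
  have "y [^] p \<in> NS G p (Suc 0)" using pow_in_pws[OF y] by (simp add: NS.simps)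
  moreover have "\<one> \<in> NS G p (Suc (Suc 0))" by (rule subgroup.one_closed[OF NS_sub])
  ultimately obtain d where "d \<in> carrier G" "x [^] p \<otimes> y [^] p \<otimes> \<one> = d [^] p"
    using C_k[OF fin p op ord pw, of 0] x by blast
  then show ?thesis using x y by auto
qed

end



lemma (in group) center_normal: "group_center G \<lhd> G"
proof -
  have sub: "subgroup (group_center G) G"
  proof (rule subgroupI)
    show "group_center G \<subseteq> carrier G" unfolding group_center_def by blast
    show "group_center G \<noteq> {}" unfolding group_center_def by force
  next
    fix a assume a: "a \<in> group_center G"
    then have ac: "a \<in> carrier G" and ca: "\<forall>g\<in>carrier G. a \<otimes> g = g \<otimes> a" unfolding group_center_def by auto
    have "inv a \<otimes> g = g \<otimes> inv a" if "g \<in> carrier G" for g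
      using inv_comm_gen[OF ac that] ca that by simp
    then show "inv a \<in> group_center G" unfolding group_center_def using ac by simp
  next
    fix a b assume a: "a \<in> group_center G" and b: "b \<in> group_center G"
    then have ac: "a \<in> carrier G" and ca: "\<forall>g\<in>carrier G. a \<otimes> g = g \<otimes> a"
      and bc: "b \<in> carrier G" and cb: "\<forall>g\<in>carrier G. b \<otimes> g = g \<otimes> b" unfolding group_center_def by auto
    have "a \<otimes> b \<otimes> g = g \<otimes> (a \<otimes> b)" if g: "g \<in> carrier G" for g
    proof -
      have "a \<otimes> b \<otimes> g = a \<otimes> (b \<otimes> g)" using ac bc g by (simp add: m_assoc)
      also have "\<dots> = a \<otimes> (g \<otimes> b)" using cb g by simp
      also have "\<dots> = (a \<otimes> g) \<otimes> b" using ac bc g by (simp add: m_assoc)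
      also have "\<dots> = (g \<otimes> a) \<otimes> b" using ca g by simp
      also have "\<dots> = g \<otimes> (a \<otimes> b)" using ac bc g by (simp add: m_assoc)
      finally show ?thesis .
    qed
    then show "a \<otimes> b \<in> group_center G" unfolding group_center_def using ac bc by simp
  qed
  show ?thesis
  proof (rule normal_invI[OF sub])
    fix x h assume x: "x \<in> carrier G" and h: "h \<in> group_center G"
    then have hc: "h \<in> carrier G" and ch: "h \<otimes> x = x \<otimes> h" unfolding group_center_def by auto
    have "x \<otimes> h \<otimes> inv x = h \<otimes> x \<otimes> inv x" using ch by simp
    also have "\<dots> = h" using x hc by (simp add: m_assoc)
    finally show "x \<otimes> h \<otimes> inv x \<in> group_center G" using h by simp
  qed
qed

theorem lemma3p4:
  fixes G (structure) and p :: nat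
  assumes "Factorial_Ring.prime p" and "odd p"
    and "p_group p G"
    and "quasi_powerful p G"
    and "g \<in> carrier G" and "h \<in> carrier G"
  shows "\<exists>j \<in> carrier G. \<exists>z \<in> group_center G.
           g [^] p \<otimes> h [^] p = j [^] p \<otimes> z"
proof -
  note p = assms(1) and op = assms(2) and g = assms(5) and h = assms(6)
  obtain n where gr: "group G" and fin: "finite (carrier G)" and ord: "order G = p ^ n"
    using assms(3) unfolding p_group_def by blast
  interpret group G by (rule gr)
  let ?Z = "group_center G"
  have nZ: "?Z \<lhd> G" by (rule center_normal)
  interpret q: qt G ?Z by (rule qt_intro[OF nZ])
  interpret QG: group q.Q by (rule q.Qgroup)
  have cQ: "carrier q.Q = rcosets ?Z" by (simp add: FactGroup_def)
  have finQ: "finite (carrier q.Q)" using fin unfolding carrier_FactGroup by simp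
  have "card (rcosets ?Z) * card ?Z = order G" by (rule lagrange[OF q.subM])
  then have "order q.Q dvd p ^ n" using ord cQ unfolding order_def by (metis dvd_triv_left)
  then obtain i where i: "order q.Q = p ^ i" using divides_primepow_nat[OF p] by blast
  have pw: "derived q.Q (carrier q.Q) \<subseteq> pth_power_subgroup p q.Q"
    using assms(4) unfolding quasi_powerful_def powerful_def .
  obtain D where D: "D \<in> carrier q.Q" "q.pr g [^]\<^bsub>q.Q\<^esub> p \<otimes>\<^bsub>q.Q\<^esub> q.pr h [^]\<^bsub>q.Q\<^esub> p = D [^]\<^bsub>q.Q\<^esub> p"
    using QG.powerful_prod[OF finQ p op i pw q.pr_carrier[OF g] q.pr_carrier[OF h]] by blast
  obtain j where j: "j \<in> carrier G" "D = q.pr j" using D(1) unfolding carrier_FactGroup by blast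
  have "q.pr (g [^] p \<otimes> h [^] p) = q.pr (j [^] p)"
    using D(2) j g h by (simp add: q.pr_mult q.pr_pow)
  then have z: "inv (j [^] p) \<otimes> (g [^] p \<otimes> h [^] p) \<in> ?Z"
    using q.pr_eq_iff g h j by simp
  have "g [^] p \<otimes> h [^] p = j [^] p \<otimes> (inv (j [^] p) \<otimes> (g [^] p \<otimes> h [^] p))"
    using g h j by simp
  then show ?thesis using z j(1) by blast
qed


end
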